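(* Let $N\ge1$, $H=(H_1,\dots,H_N)\in]0,1[^N$, $a\in\mathbb{R}^N\setminus\{(0,\dots,0)\}$, let $S^H$ be the mixed sub-fractional Brownian motion with parameters $N,a,H$, let $H_{i_0}=\min\{H_i; i\in\{1,\dots,N\},\ a_i\neq0\}$, and let $0<\epsilon<T$, $I=[\epsilon,T]$. There exists a constant $c>0$ such that for all $s,t\in I$, $$\mathrm{Var}\big(S^H(t)\,\big|\,S^H(s)\big)\ge c\,|s-t|^{2H_{i_0}},$$ where $\mathrm{Var}(Y|Z)$ denotes the conditional variance of $Y$ given $Z$.
   Context: Let $(\Omega,\mathcal F,\mathbb P)$ be a probability space. For $K\in]0,1[$, a fractional Brownian motion on $\mathbb{R}$ with Hurst index $K$ is a continuous centered Gaussian process $\{B^K(t),t\in\mathbb{R}\}$ with $\mathrm{Cov}(B^K(t),B^K(s))=\frac12(|t|^{2K}+|s|^{2K}-|t-s|^{2K})$. The sub-fractional Brownian motion (sfBm) of index $K$ is $\xi^K_t=(B^K_t+B^K_{-t})/\sqrt2$, $t\ge0$; it is a continuous centered Gaussian process with $\mathrm{Cov}(\xi^K_t,\xi^K_s)=s^{2K}+t^{2K}-\frac12\big((s+t)^{2K}+|t-s|^{2K}\big)$. For $N\ge1$, $H\in]0,1[^N$, $a\in\mathbb{R}^N\setminus\{0\}$, the mixed sub-fractional Brownian motion (msfBm) is $S^H(t)=\sum_{i=1}^N a_i\xi^{H_i}(t)$, $t\ge0$, where $\xi^{H_1},\dots,\xi^{H_N}$ are independent sfBms with indices $H_1,\dots,H_N$.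 Since $(S^H(t),S^H(s))$ is a centered Gaussian vector, $\mathrm{Var}(S^H(t)|S^H(s))$ is deterministic and equals $\inf_{b\in\mathbb{R}}\mathbb{E}(S^H(t)-bS^H(s))^2$. *)

theory Defs
  imports "HOL-Probability.Probability"
begin

definition sfbm_cov :: "real \<Rightarrow> real \<Rightarrow> real \<Rightarrow> real" where
  "sfbm_cov K t s = s powr (2*K) + t powr (2*K)
      - ((s + t) powr (2*K) + \<bar>t - s\<bar> powr (2*K)) / 2"

definition gaussian_rv :: "'a measure \<Rightarrow> ('a \<Rightarrow> real) \<Rightarrow> bool" where
  "gaussian_rv M Y \<longleftrightarrow> Y \<in> borel_measurable M \<and>
     ((\<exists>\<mu>. AE \<omega> in M. Y \<omega> = \<mu>) \<or>
      (\<exists>\<mu> \<sigma>. \<sigma> > 0 \<and> distributed M lborel Y (normal_density \<mu> \<sigma>)))"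

definition gaussian_process :: "'a measure \<Rightarrow> (real \<Rightarrow> 'a \<Rightarrow> real) \<Rightarrow> bool" where
  "gaussian_process M X \<longleftrightarrow>
     (\<forall>F c. finite F \<longrightarrow> F \<subseteq> {0..} \<longrightarrow> gaussian_rv M (\<lambda>\<omega>. \<Sum>t\<in>F. c t * X t \<omega>))"

definition is_sfbm :: "'a measure \<Rightarrow> real \<Rightarrow> (real \<Rightarrow> 'a \<Rightarrow> real) \<Rightarrow> bool" where
  "is_sfbm M K X \<longleftrightarrow>
     (\<forall>t\<ge>0. X t \<in> borel_measurable M) \<and>
     (\<forall>\<omega>\<in>space M. continuous_on {0..} (\<lambda>t. X t \<omega>)) \<and>
     gaussian_process M X \<and>
     (\<forall>t\<ge>0. integral\<^sup>L M (X t) = 0) \<and>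
     (\<forall>t\<ge>0. \<forall>s\<ge>0. integral\<^sup>L M (\<lambda>\<omega>. X t \<omega> * X s \<omega>) = sfbm_cov K t s)"

definition msfbm :: "nat \<Rightarrow> (nat \<Rightarrow> real) \<Rightarrow> (nat \<Rightarrow> real \<Rightarrow> 'a \<Rightarrow> real) \<Rightarrow> real \<Rightarrow> 'a \<Rightarrow> real" where
  "msfbm N a \<xi> t \<omega> = (\<Sum>i\<in>{1..N}. a i * \<xi> i t \<omega>)"

text \<open>Conditional variance of Y given Z for a centered Gaussian pair:
  inf over b of E (Y - b Z)^2.\<close>
definition cond_var :: "'a measure \<Rightarrow> ('a \<Rightarrow> real) \<Rightarrow> ('a \<Rightarrow> real) \<Rightarrow> real" where
  "cond_var M Y Z = (INF b::real. integral\<^sup>L M (\<lambda>\<omega>. (Y \<omega> - b * Z \<omega>)\<^sup>2))"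

end

theory Submission
  imports Defs
begin


lemma sd_bound:
  fixes p z h l :: real
  assumes p: "0 < p" "p \<le> 2" and h: "0 \<le> h" and l: "0 < l" "l \<le> z - h"
  shows "\<bar>(z+h) powr p + (z-h) powr p - 2 * z powr p\<bar> \<le> 4 * l powr (p-2) * h^2"
proof (cases "h = 0")
  case True then show ?thesis by simp
next
  case False
  hence hp: "0 < h" using h by simp
  define g where "g y = (z+y) powr p + (z-y) powr p" for y
  have "\<exists>e. 0 < e \<and> e < h \<and> g h - g 0 = (h - 0) * (p * (z+e) powr (p-1) - p * (z-e) powr (p-1))"
  proof (rule MVT2[OF hp])
    fix y assume y: "0 \<le> y" "y \<le> h"
    have "z - y > 0" using y l by linarith
    moreover have "z + y > 0" using y l by linarith
    ultimately show "DERIV g y :> p * (z+y) powr (p-1) - p * (z-y) powr (p-1)"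
      unfolding g_def by (auto intro!: derivative_eq_intros)
  qed
  then obtain e where e: "0 < e" "e < h"
    and ge: "g h - g 0 = h * (p * (z+e) powr (p-1) - p * (z-e) powr (p-1))" by auto
  have ze: "z - e < z + e" using e by simp
  have "\<exists>w. z - e < w \<and> w < z + e \<and> (z+e) powr (p-1) - (z-e) powr (p-1) = ((z+e) - (z-e)) * ((p-1) * w powr (p-1-1))"
  proof (rule MVT2[OF ze])
    fix y assume y: "z - e \<le> y" "y \<le> z + e"
    have "y > 0" using y e l by linarith
    then show "DERIV (\<lambda>y. y powr (p-1)) y :> (p-1) * y powr (p-1-1)"
      by (auto intro!: derivative_eq_intros)
  qed
  then obtain w where w: "z - e < w" "w < z + e"
    and we: "(z+e) powr (p-1) - (z-e) powr (p-1) = (2*e) * ((p-1) * w powr (p-2))" by auto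
  have wl: "l \<le> w" using w e l by linarith
  have wp: "w powr (p-2) \<le> l powr (p-2)" by (rule powr_mono2') (use p l wl in auto)
  have wnn: "0 \<le> w powr (p-2)" by simp
  have sd: "(z+h) powr p + (z-h) powr p - 2 * z powr p = h * p * (2*e) * (p-1) * w powr (p-2)"
  proof -
    have "(z+h) powr p + (z-h) powr p - 2 * z powr p = h * p * ((z+e) powr (p-1) - (z-e) powr (p-1))"
      using ge unfolding g_def by (simp add: algebra_simps)
    also have "\<dots> = h * p * ((2*e) * ((p-1) * w powr (p-2)))" by (simp only: we)
    finally show ?thesis by (simp add: algebra_simps)
  qed
  have "\<bar>h * p * (2*e) * (p-1) * w powr (p-2)\<bar> = h * p * (2*e) * \<bar>p-1\<bar> * w powr (p-2)"
    using hp p e by (simp add: abs_mult)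
  also have "\<dots> \<le> h * 2 * (2*h) * 1 * l powr (p-2)"
    using hp p e wp wnn
    by (intro mult_mono) auto
  also have "\<dots> = 4 * l powr (p-2) * h^2" by (simp add: power2_eq_square)
  finally show ?thesis using sd by simp
qed



lemma core_expand:
  fixes R :: "real \<Rightarrow> real \<Rightarrow> real" and t s h b lam :: real
  assumes sym: "\<And>x y. x > 0 \<Longrightarrow> y > 0 \<Longrightarrow> R x y = R y x"
    and pos: "t > 0" "s > 0" "t - h > 0" "t + h > 0"
  defines "x \<equiv> (\<lambda>j::nat. if j = 0 then t else if j = 1 then s else if j = 2 then t + h else t - h)"
    and "c \<equiv> (\<lambda>j::nat. if j = 0 then 1 + 2*lam else if j = 1 then -b else -lam)"
  shows "(\<Sum>j<4. \<Sum>k<4. c j * c k * R (x j) (x k)) =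
     (R t t - 2*b*R t s + b^2 * R s s)
     - 2 * lam * ((R t (t+h) + R t (t-h) - 2 * R t t) - b * (R s (t+h) + R s (t-h) - 2 * R s t))
     + lam^2 * (R (t+h) (t+h) + R (t-h) (t-h) + 4 * R t t + 2 * R (t+h) (t-h) - 4 * R (t+h) t - 4 * R (t-h) t)"
proof -
  have s1: "R s t = R t s" "R (t+h) t = R t (t+h)" "R (t-h) t = R t (t-h)"
    "R (t+h) s = R s (t+h)" "R (t-h) s = R s (t-h)" "R (t-h) (t+h) = R (t+h) (t-h)"
    "R (h+t) t = R t (h+t)" "R (h+t) s = R s (h+t)" "R (t-h) (h+t) = R (h+t) (t-h)"
    using sym pos by (auto simp: add.commute)
  have e: "{..<4::nat} = {0,1,2,3}" by auto
  show ?thesis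
    unfolding e x_def c_def
    by (simp add: s1 power2_eq_square algebra_simps)
qed



definition sdf :: "real \<Rightarrow> real \<Rightarrow> real \<Rightarrow> real" where
  "sdf p z h = (z+h) powr p + (z-h) powr p - 2 * z powr p"

lemma sdf_bound:
  assumes "0 < p" "p \<le> 2" "0 \<le> h" "0 < l" "l \<le> z - h"
  shows "\<bar>sdf p z h\<bar> \<le> 4 * l powr (p-2) * h^2"
  unfolding sdf_def using sd_bound[OF assms] .

lemma powr_split2:
  fixes x p :: real assumes "0 < x"
  shows "x^2 = x powr p * x powr (2-p)"
proof -
  have "x powr p * x powr (2-p) = x powr 2" by (simp add: powr_add[symmetric])
  also have "\<dots> = x^2" using assms by (simp add: powr_realpow')
  finally show ?thesis by simp
qed

lemma sq_le_powr:
  fixes x p T :: real assumes "0 < x" "x \<le> T" "p \<le> 2"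
  shows "x^2 \<le> x powr p * T powr (2-p)"
proof -
  have "x powr (2-p) \<le> T powr (2-p)" by (rule powr_mono2) (use assms in auto)
  then show ?thesis unfolding powr_split2[OF assms(1), of p]
    by (intro mult_left_mono) auto
qed

lemma abs3: fixes x y z a b c :: real
  shows "\<bar>x\<bar> \<le> a \<Longrightarrow> \<bar>y\<bar> \<le> b \<Longrightarrow> \<bar>z\<bar> \<le> c \<Longrightarrow> \<bar>x - y/2 - z/2\<bar> \<le> a + b/2 + c/2"
  by (simp add: abs_le_iff)
lemma abs2: fixes x y a b :: real
  shows "\<bar>x\<bar> \<le> a \<Longrightarrow> \<bar>y\<bar> \<le> b \<Longrightarrow> \<bar>x - y/2\<bar> \<le> a + b/2"
  by (simp add: abs_le_iff)
lemma absm: fixes u w a b hp :: real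
  shows "\<bar>u\<bar> \<le> a \<Longrightarrow> \<bar>w\<bar> \<le> b \<Longrightarrow> hp - a - b \<le> \<bar>u - hp - w\<bar>"
  by (simp add: abs_le_iff) linarith
lemma vb: fixes hp K x y a b :: real
  assumes "0 \<le> K" "\<bar>x\<bar> \<le> a" "\<bar>y\<bar> \<le> b" "0 \<le> hp"
  shows "(4 - K) * hp - x/2 + 2*y \<le> 4*hp + a/2 + 2*b"
proof -
  have "K * hp \<ge> 0" using assms by simp
  moreover have "(4-K)*hp = 4*hp - K*hp" by (simp add: algebra_simps)
  moreover have "x \<ge> -a" "y \<le> b" using assms by (auto simp: abs_le_iff)
  ultimately show ?thesis by linarith
qed
lemma fin1: fixes k D Cv :: real assumes "k>0" "D>0" "Cv>0"
  shows "(k*D/2)^2/(Cv*(k*D)) = k/(4*Cv)*D"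
  using assms by (simp add: field_simps power2_eq_square)
lemma lamq: fixes Q m c0 :: real assumes "c0 > 0"
  shows "Q - 2 * (m/c0) * m + (m/c0)^2 * c0 = Q - m^2/c0"
  using assms by (simp add: field_simps power2_eq_square)


lemma R_ids:
  fixes R :: "real \<Rightarrow> real \<Rightarrow> real" and p t s h :: real
  assumes Rdef: "\<And>x y. x > 0 \<Longrightarrow> y > 0 \<Longrightarrow> R x y = y powr p + x powr p - ((y+x) powr p + \<bar>x-y\<bar> powr p)/2"
    and pos: "s > 0" "t - h > 0" "0 \<le> h" "h \<le> \<bar>t - s\<bar>"
  shows "R t (t+h) + R t (t-h) - 2 * R t t = sdf p t h - sdf p (2*t) h / 2 - h powr p"
    and "R s (t+h) + R s (t-h) - 2 * R s t = sdf p t h - sdf p (s+t) h / 2 - sdf p \<bar>t-s\<bar> h / 2"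
    and "R (t+h) (t+h) + R (t-h) (t-h) + 4 * R t t + 2 * R (t+h) (t-h) - 4 * R (t+h) t - 4 * R (t-h) t
          = (4 - 2 powr p) * h powr p - sdf p (2*t) (2*h) / 2 + 2 * sdf p (2*t) h"
proof -
  have tp: "t > 0" "t + h > 0" using pos by auto
  have r1: "R t (t+h) = (t+h) powr p + t powr p - ((2*t+h) powr p + h powr p)/2"
    using Rdef[OF tp(1) tp(2)] pos by (simp add: algebra_simps)
  have r2: "R t (t-h) = (t-h) powr p + t powr p - ((2*t-h) powr p + h powr p)/2"
    using Rdef[OF tp(1) pos(2)] pos by (simp add: algebra_simps)
  have r3: "R t t = 2 * t powr p - (2*t) powr p / 2"
    using Rdef[OF tp(1) tp(1)] by (simp add: algebra_simps)
  show "R t (t+h) + R t (t-h) - 2 * R t t = sdf p t h - sdf p (2*t) h / 2 - h powr p"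
    unfolding r1 r2 r3 sdf_def by (simp add: field_simps)
  have ab: "\<bar>s - (t+h)\<bar> powr p + \<bar>s - (t-h)\<bar> powr p = (\<bar>t-s\<bar>+h) powr p + (\<bar>t-s\<bar>-h) powr p"
  proof (cases "s \<le> t")
    case True
    then have "\<bar>s - (t+h)\<bar> = \<bar>t-s\<bar>+h" "\<bar>s - (t-h)\<bar> = \<bar>t-s\<bar>-h" using pos by auto
    then show ?thesis by simp
  next
    case False
    then have "\<bar>s - (t+h)\<bar> = \<bar>t-s\<bar>-h" "\<bar>s - (t-h)\<bar> = \<bar>t-s\<bar>+h" using pos by auto
    then show ?thesis by simp
  qed
  have q1: "R s (t+h) = (t+h) powr p + s powr p - ((s+t+h) powr p + \<bar>s - (t+h)\<bar> powr p)/2"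
    using Rdef[OF pos(1) tp(2)] by (simp add: algebra_simps)
  have q2: "R s (t-h) = (t-h) powr p + s powr p - ((s+t-h) powr p + \<bar>s - (t-h)\<bar> powr p)/2"
    using Rdef[OF pos(1) pos(2)] by (simp add: algebra_simps)
  have q3: "R s t = t powr p + s powr p - ((s+t) powr p + \<bar>t-s\<bar> powr p)/2"
    using Rdef[OF pos(1) tp(1)] by (simp add: algebra_simps abs_minus_commute)
  show "R s (t+h) + R s (t-h) - 2 * R s t = sdf p t h - sdf p (s+t) h / 2 - sdf p \<bar>t-s\<bar> h / 2"
    unfolding q1 q2 q3 sdf_def using ab by (simp add: field_simps)
  have v1: "R (t+h) (t+h) = 2 * (t+h) powr p - (2*t+2*h) powr p / 2"
    using Rdef[OF tp(2) tp(2)] by (simp add: algebra_simps)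
  have v2: "R (t-h) (t-h) = 2 * (t-h) powr p - (2*t-2*h) powr p / 2"
    using Rdef[OF pos(2) pos(2)] by (simp add: algebra_simps)
  have v3: "R (t+h) (t-h) = (t-h) powr p + (t+h) powr p - ((2*t) powr p + (2*h) powr p)/2"
    using Rdef[OF tp(2) pos(2)] pos by (simp add: algebra_simps)
  have v4: "R (t+h) t = (t+h) powr p + t powr p - ((2*t+h) powr p + h powr p)/2"
    using Rdef[OF tp(2) tp(1)] pos by (simp add: algebra_simps)
  have v5: "R (t-h) t = (t-h) powr p + t powr p - ((2*t-h) powr p + h powr p)/2"
    using Rdef[OF pos(2) tp(1)] pos by (simp add: algebra_simps)
  have h2: "(2*h) powr p = 2 powr p * h powr p" using pos by (simp add: powr_mult)
  show "R (t+h) (t+h) + R (t-h) (t-h) + 4 * R t t + 2 * R (t+h) (t-h) - 4 * R (t+h) t - 4 * R (t-h) t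
          = (4 - 2 powr p) * h powr p - sdf p (2*t) (2*h) / 2 + 2 * sdf p (2*t) h"
    unfolding v1 v2 v3 v4 v5 r3 h2 sdf_def by (simp add: field_simps)
qed



lemma core:
  fixes R :: "real \<Rightarrow> real \<Rightarrow> real" and p \<epsilon> T :: real
  assumes p: "0 < p" "p < 2" and e: "0 < \<epsilon>" "\<epsilon> < T"
    and Rdef: "\<And>x y. x > 0 \<Longrightarrow> y > 0 \<Longrightarrow> R x y = y powr p + x powr p - ((y+x) powr p + \<bar>x-y\<bar> powr p)/2"
    and psd: "\<And>x c. (\<And>j. j < 4 \<Longrightarrow> x j > 0) \<Longrightarrow> 0 \<le> (\<Sum>j<4. \<Sum>k<(4::nat). c j * c k * R (x j) (x k))"
  shows "\<exists>C>0. \<forall>s\<in>{\<epsilon>..T}. \<forall>t\<in>{\<epsilon>..T}. \<forall>b. C * \<bar>s-t\<bar> powr p \<le> R t t - 2*b*R t s + b^2 * R s s"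
proof -
  define q where "q = 2 - 2 powr (p-1)"
  have "2 powr (p-1) < 2 powr 1" using p by (intro powr_less_mono) auto
  hence qpos: "q > 0" unfolding q_def by simp
  have Rself: "R x x = q * x powr p" if "x > 0" for x
  proof -
    have "2 powr p = 2 powr (p-1) * 2" using powr_add[of 2 "p-1" 1] by simp
    then show ?thesis using Rdef[OF that that] that unfolding q_def by (simp add: powr_mult field_simps)
  qed
  define Rm where "Rm = 4 * (2*T) powr p"
  have Rb: "\<bar>R x y\<bar> \<le> Rm" if "x \<in> {\<epsilon>..T}" "y \<in> {\<epsilon>..T}" for x y
  proof -
    have x0: "x > 0" "y > 0" using that e by auto
    have a1: "x powr p \<le> (2*T) powr p" "y powr p \<le> (2*T) powr p" "(y+x) powr p \<le> (2*T) powr p"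
      "\<bar>x-y\<bar> powr p \<le> (2*T) powr p"
      using that e p by (auto intro!: powr_mono2)
    have "\<bar>R x y\<bar> \<le> y powr p + x powr p + ((y+x) powr p + \<bar>x-y\<bar> powr p)/2"
    proof -
      have nn: "0 \<le> (y+x) powr p" "0 \<le> \<bar>x-y\<bar> powr p" "0 \<le> x powr p" "0 \<le> y powr p" by simp_all
      show ?thesis unfolding Rdef[OF x0] abs_le_iff using nn by (simp add: field_simps)
    qed
    also have "\<dots> \<le> Rm" unfolding Rm_def add_divide_distrib using a1 powr_ge_zero[of "2*T" p] by linarith
    finally show ?thesis .
  qed
  define \<sigma>0 where "\<sigma>0 = q * \<epsilon> powr p"
  have s0: "\<sigma>0 > 0" unfolding \<sigma>0_def using qpos e by simp
  have Rss: "R x x \<ge> \<sigma>0" if "x \<in> {\<epsilon>..T}" for x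
    using that e qpos p unfolding Rself[of x] \<sigma>0_def
    by (auto intro!: mult_left_mono powr_mono2 simp: Rself)
  define B0 where "B0 = max 1 ((2*Rm+1)/\<sigma>0)"
  have B1: "B0 \<ge> 1" unfolding B0_def by simp
  define E0 where "E0 = 4 * (\<epsilon>/2) powr (p-2)"
  define W where "W = E0 * T powr (2-p) * (3/2) * (1+B0) + B0 * 2 * 2 powr (2-p)"
  have E0p: "E0 \<ge> 0" unfolding E0_def by simp
  have Wp: "W \<ge> 0" unfolding W_def B0_def using E0p by (auto intro!: add_nonneg_nonneg mult_nonneg_nonneg)
  define \<kappa> where "\<kappa> = min (1/4) (min (\<epsilon>/(2*T)) ((1/(2*W+1)) powr (1/(2-p))))"
  have kp: "\<kappa> > 0" unfolding \<kappa>_def using e Wp by auto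
  have k14: "\<kappa> \<le> 1/4" and keT: "\<kappa> \<le> \<epsilon>/(2*T)" unfolding \<kappa>_def by auto
  have kW: "\<kappa> powr (2-p) \<le> 1/(2*W+1)"
  proof -
    have "\<kappa> powr (2-p) \<le> ((1/(2*W+1)) powr (1/(2-p))) powr (2-p)"
      unfolding \<kappa>_def using p e Wp by (intro powr_mono2) auto
    also have "\<dots> = 1/(2*W+1)" using p Wp by (simp add: powr_powr)
    finally show ?thesis .
  qed
  have k2W: "\<kappa>^2 * W \<le> \<kappa> powr p / 2"
  proof -
    have "\<kappa>^2 * W = \<kappa> powr p * (\<kappa> powr (2-p) * W)" using powr_split2[OF kp, of p] by simp
    also have "\<dots> \<le> \<kappa> powr p * (1/(2*W+1) * W)"
      using kW Wp kp by (intro mult_left_mono mult_right_mono) auto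
    also have "\<dots> \<le> \<kappa> powr p * (1/2)"
      using Wp by (intro mult_left_mono) (auto simp: field_simps)
    finally show ?thesis by simp
  qed
  define Cv where "Cv = 4 + 4 * E0 * T powr (2-p)"
  have Cvp: "Cv > 0" unfolding Cv_def using E0p powr_ge_zero[of T "2-p"] by (smt (verit) mult_nonneg_nonneg)
  define C where "C = min (1 / T powr p) (\<kappa> powr p / (4*Cv))"
  have Cp: "C > 0" unfolding C_def using e kp Cvp by auto
  show ?thesis
  proof (intro exI[of _ C] conjI Cp ballI allI)
    fix s t b assume sI: "s \<in> {\<epsilon>..T}" and tI: "t \<in> {\<epsilon>..T}"
    have sp: "s > 0" and tp: "t > 0" using sI tI e by auto
    define Q where "Q = R t t - 2*b*R t s + b^2 * R s s"

    have "C * \<bar>s-t\<bar> powr p \<le> Q"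
    proof (cases "s = t")
      case True
      have "Q = q * t powr p * (1-b)^2" unfolding Q_def True Rself[OF tp] by (simp add: power2_eq_square algebra_simps)
      moreover have "q * t powr p * (1-b)^2 \<ge> 0" using qpos by simp
      ultimately show ?thesis using True by simp
    next
      case False
      define d where "d = \<bar>t - s\<bar>"
      have dp: "d > 0" and dT: "d \<le> T" using False sI tI e by (auto simp: d_def)
      have sdeq: "\<bar>s-t\<bar> = d" by (simp add: d_def abs_minus_commute)
      define D where "D = d powr p"
      have Dp: "D > 0" unfolding D_def using dp by simp
      have DT: "D \<le> T powr p" unfolding D_def using dp dT p by (intro powr_mono2) auto
      have Cle1: "C \<le> 1 / T powr p" and Cle2: "C \<le> \<kappa> powr p/(4*Cv)" unfolding C_def by auto
      show ?thesis unfolding sdeq D_def[symmetric]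
      proof (cases "\<bar>b\<bar> \<ge> B0")
        case True
        have Rts: "\<bar>R t s\<bar> \<le> Rm" using Rb sI tI by auto
        have Rtt: "R t t \<ge> 0" using Rss[OF tI] s0 by linarith
        have Rs: "R s s \<ge> \<sigma>0" using Rss[OF sI] .
        have "(2*Rm+1)/\<sigma>0 \<le> B0" unfolding B0_def by simp
        hence B2: "2*Rm+1 \<le> B0 * \<sigma>0" using s0 by (simp add: field_simps)
        have a1: "b^2 * R s s \<ge> b^2 * \<sigma>0" using Rs by (intro mult_left_mono) auto
        have a2: "\<bar>2*b*R t s\<bar> \<le> 2*\<bar>b\<bar>*Rm" using Rts by (simp add: abs_mult mult_left_mono)
        have a3: "\<bar>b\<bar>*\<sigma>0 \<ge> 2*Rm+1" using B2 True s0 by (smt (verit) mult_right_mono)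
        have a4: "b^2*\<sigma>0 = \<bar>b\<bar>*(\<bar>b\<bar>*\<sigma>0)" by (simp add: power2_eq_square)
        have a5: "\<bar>b\<bar>*(\<bar>b\<bar>*\<sigma>0 - 2*Rm) \<ge> \<bar>b\<bar>*1" using a3 by (intro mult_left_mono) auto
        have "Q \<ge> b^2*\<sigma>0 - 2*\<bar>b\<bar>*Rm" unfolding Q_def using a1 a2 Rtt abs_ge_self[of "2*b*R t s"]
          by linarith
        moreover have "b^2*\<sigma>0 - 2*\<bar>b\<bar>*Rm = \<bar>b\<bar>*(\<bar>b\<bar>*\<sigma>0 - 2*Rm)" unfolding a4 by (simp add: algebra_simps)
        ultimately have "Q \<ge> \<bar>b\<bar>*(\<bar>b\<bar>*\<sigma>0 - 2*Rm)" by simp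
        hence Q1: "Q \<ge> 1" using a5 True B1 by linarith
        have "C * D \<le> (1 / T powr p) * T powr p" using Cle1 DT Cp Dp by (intro mult_mono) auto
        also have "\<dots> = 1" using e by simp
        finally show "C * D \<le> Q" using Q1 by linarith
      next
        case False
        hence bB: "\<bar>b\<bar> \<le> B0" by simp
        define h where "h = \<kappa> * d"
        have hp: "h > 0" unfolding h_def using kp dp by simp
        have he: "h \<le> \<epsilon>/2"
        proof -
          have "h \<le> \<epsilon>/(2*T) * T" unfolding h_def using keT dT kp dp e
            by (intro mult_mono) auto
          thus ?thesis using e by simp
        qed
        have hd: "h \<le> d/4" unfolding h_def using k14 dp by (simp add: mult_right_mono)
        have hT: "h \<le> T" using hd dT dp by simp
        have thp: "t - h > 0" using tI he e by auto
        have hts: "h \<le> \<bar>t-s\<bar>" using hd dp unfolding d_def by simp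
        note ids = R_ids[OF Rdef sp thp less_imp_le[OF hp] hts]
        define m where "m = (R t (t+h) + R t (t-h) - 2 * R t t) - b * (R s (t+h) + R s (t-h) - 2 * R s t)"
        define V where "V = R (t+h) (t+h) + R (t-h) (t-h) + 4 * R t t + 2 * R (t+h) (t-h) - 4 * R (t+h) t - 4 * R (t-h) t"
        have quad: "0 \<le> Q - 2 * lam * m + lam^2 * V" for lam
        proof -
          have symR: "R x y = R y x" if "x > 0" "y > 0" for x y
            using Rdef[OF that] Rdef[OF that(2,1)] by (simp add: add.commute abs_minus_commute)
          have tph: "t + h > 0" using tp hp by simp
          note ce = core_expand[of R t s h lam b, OF symR tp sp thp tph]
          have "0 \<le> (\<Sum>j<4. \<Sum>k<(4::nat). (\<lambda>j::nat. if j = 0 then 1 + 2*lam else if j = 1 then -b else -lam) j *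
              (\<lambda>j::nat. if j = 0 then 1 + 2*lam else if j = 1 then -b else -lam) k *
              R ((\<lambda>j::nat. if j = 0 then t else if j = 1 then s else if j = 2 then t + h else t - h) j)
                ((\<lambda>j::nat. if j = 0 then t else if j = 1 then s else if j = 2 then t + h else t - h) k))"
            by (rule psd) (use tp sp thp hp in auto)
          also have "\<dots> = Q - 2 * lam * m + lam^2 * V"
            unfolding Q_def m_def V_def by (rule ce)
          finally show ?thesis .
        qed
        have meq: "m = (sdf p t h - sdf p (2*t) h / 2 - h powr p) - b * (sdf p t h - sdf p (s+t) h / 2 - sdf p d h / 2)"
          unfolding m_def d_def using ids(1) ids(2) by simp
        have Veq: "V = (4 - 2 powr p) * h powr p - sdf p (2*t) (2*h) / 2 + 2 * sdf p (2*t) h"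
          unfolding V_def using ids(3) by simp
        have e2: "0 < \<epsilon>/2" using e by simp
        have b1: "\<bar>sdf p t h\<bar> \<le> E0 * h^2" unfolding E0_def
          by (rule sdf_bound) (use p hp e2 he tI in auto)
        have b2: "\<bar>sdf p (2*t) h\<bar> \<le> E0 * h^2" unfolding E0_def
          by (rule sdf_bound) (use p hp e2 he tI in auto)
        have b3: "\<bar>sdf p (s+t) h\<bar> \<le> E0 * h^2" unfolding E0_def
          by (rule sdf_bound) (use p hp e2 he tI sI in auto)
        have b4: "\<bar>sdf p (2*t) (2*h)\<bar> \<le> E0 * (2*h)^2" unfolding E0_def
          by (rule sdf_bound) (use p hp e2 he tI in auto)
        have b5: "\<bar>sdf p d h\<bar> \<le> 4 * (d/2) powr (p-2) * h^2"
          by (rule sdf_bound) (use p hp dp hd in auto)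
        have h2: "h^2 \<le> h powr p * T powr (2-p)" by (rule sq_le_powr) (use hp hT p in auto)
        have hpow: "h powr p = \<kappa> powr p * D" unfolding h_def D_def using kp dp by (simp add: powr_mult)
        have h2D: "h^2 \<le> \<kappa>^2 * D * T powr (2-p)"
        proof -
          have "d^2 \<le> D * T powr (2-p)" unfolding D_def by (rule sq_le_powr) (use dp dT p in auto)
          thus ?thesis unfolding h_def using kp by (simp add: power_mult_distrib mult.assoc mult_left_mono)
        qed
        have dh: "(d/2) powr (p-2) * h^2 = \<kappa>^2 * 2 powr (2-p) * D"
        proof -
          have "(d/2) powr (p-2) = d powr (p-2) * 2 powr (2-p)"
          proof -
            have i1: "2 powr (2-p) * 2 powr (p-2) = (1::real)" by (simp add: powr_add[symmetric])
            have i2: "2 powr (p-2) > (0::real)" by simp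
            have "(d/2) powr (p-2) = d powr (p-2) / 2 powr (p-2)" by (rule powr_divide)
            also have "\<dots> = d powr (p-2) * 2 powr (2-p)" using i1 i2 by (simp add: field_simps)
            finally show ?thesis .
          qed
          moreover have "d powr (p-2) * d^2 = D"
          proof -
            have "d^2 = d powr 2" using dp by (simp add: powr_realpow')
            thus ?thesis unfolding D_def by (simp add: powr_add[symmetric])
          qed
          ultimately show ?thesis unfolding h_def by (simp add: power_mult_distrib algebra_simps)
        qed
        have E0h: "0 \<le> E0 * h^2" using E0p by simp
        define X where "X = (d/2) powr (p-2)"
        have mlow: "\<bar>m\<bar> \<ge> h powr p - (E0*h^2 + E0*h^2/2) - B0 * (E0*h^2 + E0*h^2/2 + 4*X*h^2/2)"
        proof -
          have y1: "\<bar>sdf p t h - sdf p (s+t) h / 2 - sdf p d h / 2\<bar> \<le> E0*h^2 + E0*h^2/2 + 4*X*h^2/2"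
            using abs3[OF b1 b3 b5] unfolding X_def by simp
          have y2: "\<bar>b * (sdf p t h - sdf p (s+t) h / 2 - sdf p d h / 2)\<bar> \<le> B0 * (E0*h^2 + E0*h^2/2 + 4*X*h^2/2)"
            unfolding abs_mult using bB y1 by (intro mult_mono) auto
          have y3: "\<bar>sdf p t h - sdf p (2*t) h / 2\<bar> \<le> E0*h^2 + E0*h^2/2"
            using abs2[OF b1 b2] .
          have "h powr p - (E0*h^2 + E0*h^2/2) - B0 * (E0*h^2 + E0*h^2/2 + 4*X*h^2/2)
             \<le> \<bar>(sdf p t h - sdf p (2*t) h / 2) - h powr p - b * (sdf p t h - sdf p (s+t) h / 2 - sdf p d h / 2)\<bar>"
            by (rule absm[OF y3 y2])
          also have "\<dots> = \<bar>m\<bar>" unfolding meq by (simp add: algebra_simps)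
          finally show ?thesis .
        qed
        have mlow2: "\<bar>m\<bar> \<ge> \<kappa> powr p * D / 2"
        proof -
          have "(E0*h^2 + E0*h^2/2) + B0 * (E0*h^2 + E0*h^2/2 + 4*X*h^2/2)
                = (3/2)*(1+B0)*E0*h^2 + B0*2*(X * h^2)" by (simp add: algebra_simps)
          also have "\<dots> \<le> (3/2)*(1+B0)*E0*(\<kappa>^2 * D * T powr (2-p)) + B0*2*(\<kappa>^2 * 2 powr (2-p) * D)"
            unfolding X_def dh using h2D B1 E0p by (intro add_mono mult_left_mono) auto
          also have "\<dots> = \<kappa>^2 * W * D" unfolding W_def by (simp add: algebra_simps)
          also have "\<dots> \<le> \<kappa> powr p / 2 * D" using k2W Dp by (intro mult_right_mono) auto
          finally show ?thesis using mlow hpow by simp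
        qed
        have Vup: "V \<le> Cv * h powr p"
        proof -
          have "V \<le> 4 * h powr p + E0 * (2*h)^2 / 2 + 2 * (E0 * h^2)"
            unfolding Veq by (rule vb[OF _ b4 b2]) auto
          also have "\<dots> = 4 * h powr p + 4 * E0 * h^2" by (simp add: algebra_simps power2_eq_square)
          also have "\<dots> \<le> 4 * h powr p + 4 * E0 * (h powr p * T powr (2-p))"
            using h2 E0p by (intro add_mono mult_left_mono) auto
          also have "\<dots> = Cv * h powr p" unfolding Cv_def by (simp add: algebra_simps)
          finally show ?thesis .
        qed
        have hpp: "h powr p > 0" using hp by simp
        define lam where "lam = m / (Cv * h powr p)"
        have "0 \<le> Q - 2 * lam * m + lam^2 * V" by (rule quad)
        also have "\<dots> \<le> Q - 2 * lam * m + lam^2 * (Cv * h powr p)"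
          using Vup by (intro add_left_mono mult_left_mono) auto
        also have "\<dots> = Q - m^2 / (Cv * h powr p)"
          unfolding lam_def by (rule lamq) (use Cvp hpp in simp)
        finally have Qm: "m^2 / (Cv * h powr p) \<le> Q" by simp
        have "(\<kappa> powr p * D / 2)^2 \<le> \<bar>m\<bar>^2"
          by (rule power_mono) (use mlow2 Dp in auto)
        hence "(\<kappa> powr p * D / 2)^2 \<le> m^2" by simp
        hence "(\<kappa> powr p * D / 2)^2 / (Cv * h powr p) \<le> m^2 / (Cv * h powr p)"
          using Cvp hpp by (intro divide_right_mono) auto
        moreover have "(\<kappa> powr p * D / 2)^2 / (Cv * h powr p) = \<kappa> powr p / (4*Cv) * D"
          unfolding hpow by (rule fin1) (use Cvp kp Dp in auto)
        moreover have "C * D \<le> \<kappa> powr p / (4*Cv) * D" using Cle2 Dp by (intro mult_right_mono) auto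
        ultimately show "C * D \<le> Q" using Qm by linarith
      qed
    qed
    thus "C * \<bar>s-t\<bar> powr p \<le> R t t - 2*b*R t s + b^2 * R s s" unfolding Q_def .
  qed
qed



lemma sqint_prod:
  fixes f g :: "'a \<Rightarrow> real"
  assumes "f \<in> borel_measurable M" "g \<in> borel_measurable M"
    "integrable M (\<lambda>x. f x * f x)" "integrable M (\<lambda>x. g x * g x)"
  shows "integrable M (\<lambda>x. f x * g x)"
proof (rule Bochner_Integration.integrable_bound[where f="\<lambda>x. f x * f x + g x * g x"])
  show "integrable M (\<lambda>x. f x * f x + g x * g x)" using assms by auto
  show "(\<lambda>x. f x * g x) \<in> borel_measurable M" using assms by auto
  show "AE x in M. norm (f x * g x) \<le> norm (f x * f x + g x * g x)"
  proof (rule AE_I2)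
    fix x
    have "0 \<le> (\<bar>f x\<bar> - \<bar>g x\<bar>)^2" by simp
    hence "2 * \<bar>f x\<bar> * \<bar>g x\<bar> \<le> f x * f x + g x * g x" by (simp add: power2_eq_square algebra_simps abs_mult_self_eq)
    moreover have "0 \<le> f x * f x + g x * g x" by simp
    moreover have "norm (f x * g x) = \<bar>f x\<bar> * \<bar>g x\<bar>" by (simp add: abs_mult)
    moreover have "0 \<le> \<bar>f x\<bar> * \<bar>g x\<bar>" by simp
    ultimately show "norm (f x * g x) \<le> norm (f x * f x + g x * g x)"
      by simp
  qed
qed

lemma (in prob_space) sqint_int:
  fixes f :: "'a \<Rightarrow> real"
  assumes "f \<in> borel_measurable M" "integrable M (\<lambda>x. f x * f x)"
  shows "integrable M f"
proof (rule Bochner_Integration.integrable_bound[where f="\<lambda>x. 1 + f x * f x"])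
  show "integrable M (\<lambda>x. 1 + f x * f x)" using assms by auto
  show "f \<in> borel_measurable M" using assms by auto
  show "AE x in M. norm (f x) \<le> norm (1 + f x * f x)"
  proof (rule AE_I2)
    fix x
    have "\<bar>f x\<bar> \<le> 1 + f x * f x"
    proof (cases "\<bar>f x\<bar> \<le> 1")
      case True then show ?thesis using zero_le_square[of "f x"] by linarith
    next
      case False
      then have "\<bar>f x\<bar> * 1 \<le> \<bar>f x\<bar> * \<bar>f x\<bar>" by (intro mult_left_mono) auto
      then show ?thesis by (simp add: abs_mult_self_eq)
    qed
    then show "norm (f x) \<le> norm (1 + f x * f x)" by simp
  qed
qed

lemma expand_sq:
  fixes F :: "'i \<Rightarrow> 'a \<Rightarrow> real" and c :: "'i \<Rightarrow> real"
  assumes fin: "finite J" and meas: "\<And>j. j \<in> J \<Longrightarrow> F j \<in> borel_measurable M"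
    and sq: "\<And>j. j \<in> J \<Longrightarrow> integrable M (\<lambda>x. F j x * F j x)"
  shows "integral\<^sup>L M (\<lambda>x. (\<Sum>j\<in>J. c j * F j x)^2) =
         (\<Sum>j\<in>J. \<Sum>k\<in>J. c j * c k * integral\<^sup>L M (\<lambda>x. F j x * F k x))"
proof -
  have pi: "integrable M (\<lambda>x. F j x * F k x)" if "j \<in> J" "k \<in> J" for j k
    using sqint_prod[OF meas meas sq sq] that by auto
  have "(\<lambda>x. (\<Sum>j\<in>J. c j * F j x)^2) = (\<lambda>x. \<Sum>j\<in>J. \<Sum>k\<in>J. c j * c k * (F j x * F k x))"
    by (simp add: power2_eq_square sum_product algebra_simps)
  hence "integral\<^sup>L M (\<lambda>x. (\<Sum>j\<in>J. c j * F j x)^2) = integral\<^sup>L M (\<lambda>x. \<Sum>j\<in>J. \<Sum>k\<in>J. c j * c k * (F j x * F k x))"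
    by simp
  also have "\<dots> = (\<Sum>j\<in>J. integral\<^sup>L M (\<lambda>x. \<Sum>k\<in>J. c j * c k * (F j x * F k x)))"
    by (rule Bochner_Integration.integral_sum) (use pi in auto)
  also have "\<dots> = (\<Sum>j\<in>J. \<Sum>k\<in>J. integral\<^sup>L M (\<lambda>x. c j * c k * (F j x * F k x)))"
    by (intro sum.cong refl Bochner_Integration.integral_sum) (use pi in auto)
  also have "\<dots> = (\<Sum>j\<in>J. \<Sum>k\<in>J. c j * c k * integral\<^sup>L M (\<lambda>x. F j x * F k x))"
    by simp
  finally show ?thesis .
qed

lemma sfbm_sq_int:
  assumes "is_sfbm M K X" "0 < K" "K < 1" "t > 0"
  shows "integrable M (\<lambda>x. X t x * X t x)" and "X t \<in> borel_measurable M"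
proof -
  show "X t \<in> borel_measurable M" using assms unfolding is_sfbm_def by auto
  have cov: "integral\<^sup>L M (\<lambda>x. X t x * X t x) = sfbm_cov K t t" using assms unfolding is_sfbm_def by auto
  have "2 powr (2*K) < 2 powr 2" using assms by (intro powr_less_mono) auto
  hence l4: "2 powr (2*K) < (4::real)" by simp
  have tp: "t powr (2*K) > 0" using assms by simp
  have "sfbm_cov K t t = t powr (2*K) * (2 - 2 powr (2*K) / 2)"
    unfolding sfbm_cov_def using assms by (simp add: powr_mult field_simps)
  moreover have "t powr (2*K) * (2 - 2 powr (2*K) / 2) > 0" using tp l4 by simp
  ultimately have pos: "sfbm_cov K t t > 0" by (simp only:)
  have "integral\<^sup>L M (\<lambda>x. X t x * X t x) \<noteq> 0" using cov pos by linarith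
  then show "integrable M (\<lambda>x. X t x * X t x)" using not_integrable_integral_eq by blast
qed



lemma sqint_lin:
  fixes f g :: "'a \<Rightarrow> real"
  assumes "f \<in> borel_measurable M" "g \<in> borel_measurable M"
    "integrable M (\<lambda>x. f x * f x)" "integrable M (\<lambda>x. g x * g x)"
  shows "integrable M (\<lambda>x. (f x - b * g x) * (f x - b * g x))"
    and "integral\<^sup>L M (\<lambda>x. (f x - b * g x) * (f x - b * g x)) =
         integral\<^sup>L M (\<lambda>x. f x * f x) - 2 * b * integral\<^sup>L M (\<lambda>x. f x * g x) + b^2 * integral\<^sup>L M (\<lambda>x. g x * g x)"
proof -
  have fg: "integrable M (\<lambda>x. f x * g x)" by (rule sqint_prod[OF assms])
  have eq: "(\<lambda>x. (f x - b * g x) * (f x - b * g x)) = (\<lambda>x. f x * f x - (2*b) * (f x * g x) + b^2 * (g x * g x))"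
    by (auto simp: fun_eq_iff algebra_simps power2_eq_square)
  show "integrable M (\<lambda>x. (f x - b * g x) * (f x - b * g x))"
    unfolding eq using assms fg by auto
  show "integral\<^sup>L M (\<lambda>x. (f x - b * g x) * (f x - b * g x)) =
         integral\<^sup>L M (\<lambda>x. f x * f x) - 2 * b * integral\<^sup>L M (\<lambda>x. f x * g x) + b^2 * integral\<^sup>L M (\<lambda>x. g x * g x)"
    unfolding eq using assms fg by (simp add: Bochner_Integration.integral_diff Bochner_Integration.integral_add)
qed



theorem lemma17:
  fixes M :: "'a measure" and N :: nat and H a :: "nat \<Rightarrow> real"
    and \<xi> :: "nat \<Rightarrow> real \<Rightarrow> 'a \<Rightarrow> real" and \<epsilon> T :: real
  assumes "prob_space M"
    and "N \<ge> 1"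
    and "\<forall>i\<in>{1..N}. 0 < H i \<and> H i < 1"
    and "\<exists>i\<in>{1..N}. a i \<noteq> 0"
    and "\<forall>i\<in>{1..N}. is_sfbm M (H i) (\<xi> i)"
    and "prob_space.indep_vars M (\<lambda>i. Pi\<^sub>M {0::real..} (\<lambda>_. (borel :: real measure))) (\<lambda>i \<omega>. \<lambda>t\<in>{0..}. \<xi> i t \<omega>) {1..N}"
    and "0 < \<epsilon>" and "\<epsilon> < T"
  shows "\<exists>c>0. \<forall>s\<in>{\<epsilon>..T}. \<forall>t\<in>{\<epsilon>..T}.
           cond_var M (msfbm N a \<xi> t) (msfbm N a \<xi> s)
             \<ge> c * \<bar>s - t\<bar> powr (2 * Min {H i | i. i \<in> {1..N} \<and> a i \<noteq> 0})"
proof -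
  interpret P: prob_space M by (rule assms(1))
  define A where "A = {H i | i. i \<in> {1..N} \<and> a i \<noteq> 0}"
  have Aeq: "A = H ` {i \<in> {1..N}. a i \<noteq> 0}" unfolding A_def by auto
  have Afin: "finite A" unfolding Aeq by simp
  have Ane: "A \<noteq> {}" unfolding Aeq using assms(4) by auto
  have "Min A \<in> A" using Afin Ane by (rule Min_in)
  then obtain i0 where i0: "i0 \<in> {1..N}" "a i0 \<noteq> 0" "H i0 = Min A" unfolding Aeq by auto
  define K where "K = H i0"
  define p where "p = 2 * K"
  have K: "0 < K" "K < 1" using assms(3) i0(1) unfolding K_def by auto
  have sf: "is_sfbm M (H i) (\<xi> i)" if "i \<in> {1..N}" for i using assms(5) that by auto
  have sqi: "integrable M (\<lambda>x. \<xi> i t x * \<xi> i t x)" "\<xi> i t \<in> borel_measurable M"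
    if "i \<in> {1..N}" "t > 0" for i t
    using sfbm_sq_int[OF sf[OF that(1)]] assms(3) that by auto
  have cov: "integral\<^sup>L M (\<lambda>x. \<xi> i t x * \<xi> i s x) = sfbm_cov (H i) t s"
    if "i \<in> {1..N}" "t \<ge> 0" "s \<ge> 0" for i t s
    using sf[OF that(1)] that unfolding is_sfbm_def by auto
  have mean: "integral\<^sup>L M (\<xi> i t) = 0" if "i \<in> {1..N}" "t \<ge> 0" for i t
    using sf[OF that(1)] that unfolding is_sfbm_def by auto
  have psd: "0 \<le> (\<Sum>j<4. \<Sum>k<(4::nat). c j * c k * sfbm_cov K (x j) (x k))"
    if xp: "\<And>j. j < 4 \<Longrightarrow> x j > 0" for x c
  proof -
    have "(\<Sum>j<4. \<Sum>k<(4::nat). c j * c k * sfbm_cov K (x j) (x k)) =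
          (\<Sum>j<4. \<Sum>k<(4::nat). c j * c k * integral\<^sup>L M (\<lambda>\<omega>. \<xi> i0 (x j) \<omega> * \<xi> i0 (x k) \<omega>))"
      using cov[OF i0(1)] xp unfolding K_def by (intro sum.cong refl) (auto simp: less_imp_le)
    also have "\<dots> = integral\<^sup>L M (\<lambda>\<omega>. (\<Sum>j<4. c j * \<xi> i0 (x j) \<omega>)^2)"
      by (rule expand_sq[symmetric]) (use sqi[OF i0(1)] xp in auto)
    also have "\<dots> \<ge> 0" by simp
    finally show ?thesis .
  qed
  have Rdef: "sfbm_cov K x y = y powr p + x powr p - ((y+x) powr p + \<bar>x-y\<bar> powr p)/2" for x y
    unfolding sfbm_cov_def p_def ..
  obtain C where C: "C > 0" and Cb: "\<forall>s\<in>{\<epsilon>..T}. \<forall>t\<in>{\<epsilon>..T}. \<forall>b. C * \<bar>s-t\<bar> powr p \<le>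
      sfbm_cov K t t - 2*b* sfbm_cov K t s + b^2 * sfbm_cov K s s"
  proof -
    have "\<exists>C>0. \<forall>s\<in>{\<epsilon>..T}. \<forall>t\<in>{\<epsilon>..T}. \<forall>b. C * \<bar>s-t\<bar> powr p \<le>
      sfbm_cov K t t - 2*b * sfbm_cov K t s + b^2 * sfbm_cov K s s"
    proof (rule core)
      show "0 < p" "p < 2" using K unfolding p_def by auto
      show "0 < \<epsilon>" "\<epsilon> < T" using assms(7,8) by auto
      show "sfbm_cov K x y = y powr p + x powr p - ((y+x) powr p + \<bar>x-y\<bar> powr p)/2" for x y by (rule Rdef)
      show "0 \<le> (\<Sum>j<4. \<Sum>k<(4::nat). c j * c k * sfbm_cov K (x j) (x k))" if "\<And>j. j < 4 \<Longrightarrow> x j > 0" for x c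
        by (rule psd) (use that in auto)
    qed
    then show ?thesis using that by blast
  qed
  show ?thesis
  proof (intro exI[of _ "(a i0)^2 * C"] conjI ballI)
    show "(a i0)^2 * C > 0" using C i0(2) by simp
    fix s t assume sI: "s \<in> {\<epsilon>..T}" and tI: "t \<in> {\<epsilon>..T}"
    have sp: "s > 0" and tp: "t > 0" using sI tI assms(7) by auto
    have key: "(a i0)^2 * C * \<bar>s-t\<bar> powr p \<le> integral\<^sup>L M (\<lambda>\<omega>. (msfbm N a \<xi> t \<omega> - b * msfbm N a \<xi> s \<omega>)^2)" for b
    proof -
      define G where "G i \<omega> = \<xi> i t \<omega> - b * \<xi> i s \<omega>" for i \<omega>
      have Gm: "G i \<in> borel_measurable M" if "i \<in> {1..N}" for i
        unfolding G_def using sqi[OF that tp] sqi[OF that sp] by auto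
      have Gsq: "integrable M (\<lambda>\<omega>. G i \<omega> * G i \<omega>)" if "i \<in> {1..N}" for i
        unfolding G_def by (rule sqint_lin(1)) (use sqi[OF that tp] sqi[OF that sp] in auto)
      have Gint: "integrable M (G i)" if "i \<in> {1..N}" for i
        by (rule P.sqint_int[OF Gm[OF that] Gsq[OF that]])
      have Gmean: "integral\<^sup>L M (G i) = 0" if "i \<in> {1..N}" for i
      proof -
        have "integrable M (\<xi> i t)" by (rule P.sqint_int[OF sqi(2)[OF that tp] sqi(1)[OF that tp]])
        moreover have "integrable M (\<xi> i s)" by (rule P.sqint_int[OF sqi(2)[OF that sp] sqi(1)[OF that sp]])
        ultimately show ?thesis unfolding G_def using mean[OF that] sp tp by simp
      qed
      have indepG: "P.indep_vars (\<lambda>_. borel) G {1..N}"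
      proof -
        have m: "(\<lambda>f. f t - b * f s) \<in> measurable (Pi\<^sub>M {0::real..} (\<lambda>_. (borel :: real measure))) borel"
          by (intro borel_measurable_diff borel_measurable_times borel_measurable_const measurable_component_singleton) (use sp tp in auto)
        have "P.indep_vars (\<lambda>_. borel) (\<lambda>i \<omega>. (\<lambda>f. f t - b * f s) ((\<lambda>t\<in>{0..}. \<xi> i t \<omega>))) {1..N}"
          by (rule P.indep_vars_compose2[OF assms(6)]) (use m in auto)
        moreover have "(\<lambda>i \<omega>. (\<lambda>f. f t - b * f s) ((\<lambda>t\<in>{0..}. \<xi> i t \<omega>))) = G"
          using sp tp by (auto simp: fun_eq_iff G_def)
        ultimately show ?thesis by simp
      qed
      have off: "integral\<^sup>L M (\<lambda>\<omega>. G i \<omega> * G j \<omega>) = 0" if "i \<in> {1..N}" "j \<in> {1..N}" "i \<noteq> j" for i j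
      proof -
        have ind2: "P.indep_vars (\<lambda>_. borel) G {i,j}"
          by (rule P.indep_vars_subset[OF indepG]) (use that in auto)
        have "integral\<^sup>L M (\<lambda>\<omega>. \<Prod>k\<in>{i,j}. G k \<omega>) = (\<Prod>k\<in>{i,j}. integral\<^sup>L M (G k))"
          by (rule P.indep_vars_lebesgue_integral) (use ind2 Gint that in auto)
        then show ?thesis using that Gmean by simp
      qed
      have Seq: "(\<lambda>\<omega>. (msfbm N a \<xi> t \<omega> - b * msfbm N a \<xi> s \<omega>)^2) = (\<lambda>\<omega>. (\<Sum>i\<in>{1..N}. a i * G i \<omega>)^2)"
              proof -
        have "msfbm N a \<xi> t \<omega> - b * msfbm N a \<xi> s \<omega> = (\<Sum>i\<in>{1..N}. a i * G i \<omega>)" for \<omega>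
          unfolding msfbm_def G_def sum_distrib_left sum_subtractf[symmetric] by (simp add: algebra_simps)
        then show ?thesis by simp
      qed
      have "integral\<^sup>L M (\<lambda>\<omega>. (\<Sum>i\<in>{1..N}. a i * G i \<omega>)^2)
          = (\<Sum>i\<in>{1..N}. \<Sum>j\<in>{1..N}. a i * a j * integral\<^sup>L M (\<lambda>\<omega>. G i \<omega> * G j \<omega>))"
        by (rule expand_sq) (use Gm Gsq in auto)
      also have "\<dots> = (\<Sum>i\<in>{1..N}. (a i)^2 * integral\<^sup>L M (\<lambda>\<omega>. G i \<omega> * G i \<omega>))"
      proof (rule sum.cong[OF refl])
        fix i assume i: "i \<in> {1..N}"
        have "(\<Sum>j\<in>{1..N}. a i * a j * integral\<^sup>L M (\<lambda>\<omega>. G i \<omega> * G j \<omega>))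
            = (\<Sum>j\<in>{1..N}. if j = i then a i * a j * integral\<^sup>L M (\<lambda>\<omega>. G i \<omega> * G j \<omega>) else 0)"
          by (rule sum.cong[OF refl]) (use off i in auto)
        also have "\<dots> = (a i)^2 * integral\<^sup>L M (\<lambda>\<omega>. G i \<omega> * G i \<omega>)"
          using i by (simp add: power2_eq_square)
        finally show "(\<Sum>j\<in>{1..N}. a i * a j * integral\<^sup>L M (\<lambda>\<omega>. G i \<omega> * G j \<omega>)) = (a i)^2 * integral\<^sup>L M (\<lambda>\<omega>. G i \<omega> * G i \<omega>)" .
      qed
      also have "\<dots> \<ge> (a i0)^2 * integral\<^sup>L M (\<lambda>\<omega>. G i0 \<omega> * G i0 \<omega>)"
        by (rule member_le_sum) (use i0(1) in auto)
      finally have ge: "integral\<^sup>L M (\<lambda>\<omega>. (msfbm N a \<xi> t \<omega> - b * msfbm N a \<xi> s \<omega>)^2)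
          \<ge> (a i0)^2 * integral\<^sup>L M (\<lambda>\<omega>. G i0 \<omega> * G i0 \<omega>)" unfolding Seq .
      have "integral\<^sup>L M (\<lambda>\<omega>. G i0 \<omega> * G i0 \<omega>) = sfbm_cov K t t - 2*b* sfbm_cov K t s + b^2 * sfbm_cov K s s"
        unfolding G_def sqint_lin(2)[OF sqi(2)[OF i0(1) tp] sqi(2)[OF i0(1) sp] sqi(1)[OF i0(1) tp] sqi(1)[OF i0(1) sp]]
        using cov[OF i0(1)] sp tp unfolding K_def by simp
      moreover have "C * \<bar>s-t\<bar> powr p \<le> sfbm_cov K t t - 2*b* sfbm_cov K t s + b^2 * sfbm_cov K s s"
        using Cb sI tI by auto
      ultimately have "(a i0)^2 * (C * \<bar>s-t\<bar> powr p) \<le> (a i0)^2 * integral\<^sup>L M (\<lambda>\<omega>. G i0 \<omega> * G i0 \<omega>)"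
        by (intro mult_left_mono) auto
      then show ?thesis using ge by (simp add: mult.assoc)
    qed
    have "(a i0)^2 * C * \<bar>s-t\<bar> powr p \<le> cond_var M (msfbm N a \<xi> t) (msfbm N a \<xi> s)"
      unfolding cond_var_def by (rule cINF_greatest) (use key in auto)
    moreover have "2 * Min {H i | i. i \<in> {1..N} \<and> a i \<noteq> 0} = p"
      unfolding p_def K_def i0(3) A_def ..
    ultimately show "cond_var M (msfbm N a \<xi> t) (msfbm N a \<xi> s)
             \<ge> (a i0)^2 * C * \<bar>s - t\<bar> powr (2 * Min {H i | i. i \<in> {1..N} \<and> a i \<noteq> 0})" by simp
  qed
qed

end
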